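(* Let $G$ be an additive group and let $X$ and $\preceq$ be as described below. Then $(X,\preceq)$ is an upper-semilinear $\vee$-semilattice.
   Context: A function $f$ defined on an interval $(\alpha,\beta)$ is piecewise constant from the left if for every $x\in(\alpha,\beta)$ there is $\varepsilon>0$ with $f$ constant on $[x-\varepsilon,x]$. $X$ is the set of pairs $(f,a_f)$ where $a_f>0$ is a real number and $f:(a_f,+\infty)\to G$ is piecewise constant from the left with $f|_{(b_f,+\infty)}\equiv 0$ for some $b_f\ge a_f$. The partial order is: $(f,a_f)\preceq(g,a_g)$ iff $a_f\le a_g$ and $f|_{(a_g,+\infty)}=g$. A $\vee$-semilattice is a poset in which any two elements have a supremum; it is upper-semilinear if every upper cone $\{y: x\preceq y\}$ is linearly ordered. *)

theory Defs
  imports Complex_Main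
begin

text \<open>A function on (a,+inf) is represented by a total function real => G which is
  normalised to 0 on (-inf, a], so that equality of pairs is equality of the
  partial functions.\<close>

definition pc_left :: "real \<Rightarrow> (real \<Rightarrow> 'g) \<Rightarrow> bool" where
  "pc_left a f \<longleftrightarrow> (\<forall>x>a. \<exists>\<epsilon>>0. x - \<epsilon> > a \<and> (\<forall>y\<in>{x - \<epsilon>..x}. f y = f x))"

definition Xset :: "((real \<Rightarrow> 'g::group_add) \<times> real) set" where
  "Xset = {(f, a). a > 0 \<and> (\<forall>x\<le>a. f x = 0) \<and> pc_left a f \<and>
                   (\<exists>b\<ge>a. \<forall>x>b. f x = 0)}"

definition Xle :: "((real \<Rightarrow> 'g) \<times> real) \<Rightarrow> ((real \<Rightarrow> 'g) \<times> real) \<Rightarrow> bool" where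
  "Xle p q \<longleftrightarrow> snd p \<le> snd q \<and> (\<forall>x>snd q. fst p x = fst q x)"

definition is_sup_on :: "'a set \<Rightarrow> ('a \<Rightarrow> 'a \<Rightarrow> bool) \<Rightarrow> 'a \<Rightarrow> 'a \<Rightarrow> 'a \<Rightarrow> bool" where
  "is_sup_on A le x y s \<longleftrightarrow> s \<in> A \<and> le x s \<and> le y s \<and>
     (\<forall>z\<in>A. le x z \<and> le y z \<longrightarrow> le s z)"

definition poset_on :: "'a set \<Rightarrow> ('a \<Rightarrow> 'a \<Rightarrow> bool) \<Rightarrow> bool" where
  "poset_on A le \<longleftrightarrow> (\<forall>x\<in>A. le x x) \<and>
     (\<forall>x\<in>A. \<forall>y\<in>A. le x y \<and> le y x \<longrightarrow> x = y) \<and>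
     (\<forall>x\<in>A. \<forall>y\<in>A. \<forall>z\<in>A. le x y \<and> le y z \<longrightarrow> le x z)"

definition join_semilattice_on :: "'a set \<Rightarrow> ('a \<Rightarrow> 'a \<Rightarrow> bool) \<Rightarrow> bool" where
  "join_semilattice_on A le \<longleftrightarrow> poset_on A le \<and>
     (\<forall>x\<in>A. \<forall>y\<in>A. \<exists>s. is_sup_on A le x y s)"

definition upper_semilinear_on :: "'a set \<Rightarrow> ('a \<Rightarrow> 'a \<Rightarrow> bool) \<Rightarrow> bool" where
  "upper_semilinear_on A le \<longleftrightarrow>
     (\<forall>x\<in>A. \<forall>y\<in>A. \<forall>z\<in>A. le x y \<and> le x z \<longrightarrow> le y z \<or> le z y)"

end

theory Submission
  imports Defs
begin

lemma Xset_iff: "(f, a) \<in> Xset \<longleftrightarrow> a > 0 \<and> (\<forall>x\<le>a. f x = 0) \<and> pc_left a f \<and>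
                   (\<exists>b\<ge>a. \<forall>x>b. f x = 0)"
  by (simp add: Xset_def)

lemma antisym_X: "Xle p q \<Longrightarrow> Xle q p \<Longrightarrow> p \<in> (Xset :: ((real \<Rightarrow> 'g::group_add) \<times> real) set) \<Longrightarrow> q \<in> Xset \<Longrightarrow> p = q"
proof -
  assume le1: "Xle p q" and le2: "Xle q p" and p: "p \<in> (Xset :: ((real \<Rightarrow> 'g::group_add) \<times> real) set)" and q: "q \<in> Xset"
  obtain f a where pe: "p = (f, a)" by (cases p)
  obtain g b where qe: "q = (g, b)" by (cases q)
  have ab: "a = b" using le1 le2 unfolding Xle_def pe qe by simp
  have fz: "\<forall>x\<le>a. f x = 0" using p unfolding pe Xset_def by simp
  have gz: "\<forall>x\<le>b. g x = 0" using q unfolding qe Xset_def by simp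
  have agr: "\<forall>x>b. f x = g x" using le1 unfolding Xle_def pe qe by simp
  have "f x = g x" for x
  proof (cases "x > b")
    case True then show ?thesis using agr by blast
  next
    case False then show ?thesis using fz gz ab by simp
  qed
  then have "f = g" by (rule ext)
  then show "p = q" using ab pe qe by simp
qed

lemma trans_X: "Xle p q \<Longrightarrow> Xle q r \<Longrightarrow> Xle p r"
proof -
  assume h1: "Xle p q" and h2: "Xle q r"
  have 1: "snd p \<le> snd r" using h1 h2 unfolding Xle_def by linarith
  have 2: "\<forall>x>snd r. fst p x = fst r x"
  proof (intro allI impI)
    fix x assume x: "x > snd r"
    then have "x > snd q" using h2 unfolding Xle_def by linarith
    then have "fst p x = fst q x" using h1 unfolding Xle_def by blast
    also have "\<dots> = fst r x" using h2 x unfolding Xle_def by blast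
    finally show "fst p x = fst r x" .
  qed
  show "Xle p r" using 1 2 unfolding Xle_def by blast
qed

lemma poset: "poset_on (Xset :: ((real \<Rightarrow> 'g::group_add) \<times> real) set) Xle"
  unfolding poset_on_def
  using antisym_X trans_X by (auto simp: Xle_def)

lemma semilinear: "upper_semilinear_on (Xset :: ((real \<Rightarrow> 'g::group_add) \<times> real) set) Xle"
  unfolding upper_semilinear_on_def Xle_def
proof (intro ballI impI)
  fix x y z :: "(real \<Rightarrow> 'g) \<times> real"
  assume h: "(snd x \<le> snd y \<and> (\<forall>t>snd y. fst x t = fst y t)) \<and>
        snd x \<le> snd z \<and> (\<forall>t>snd z. fst x t = fst z t)"
  show "snd y \<le> snd z \<and> (\<forall>t>snd z. fst y t = fst z t) \<or>
        snd z \<le> snd y \<and> (\<forall>t>snd y. fst z t = fst y t)"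
  proof (cases "snd y \<le> snd z")
    case True then show ?thesis using h by force
  next
    case False then show ?thesis using h by force
  qed
qed

lemma sup_exists:
  assumes p: "p \<in> (Xset :: ((real \<Rightarrow> 'g::group_add) \<times> real) set)" and q: "q \<in> Xset"
  shows "\<exists>s. is_sup_on Xset Xle p q s"
proof -
  obtain f a where pe: "p = (f, a)" by (cases p)
  obtain g b where qe: "q = (g, b)" by (cases q)
  have a0: "a > 0" and fz: "\<forall>x\<le>a. f x = 0" and fpc: "pc_left a f"
    and fb: "\<exists>b\<ge>a. \<forall>x>b. f x = 0" using p by (auto simp: pe Xset_iff)
  have b0: "b > 0" and gz: "\<forall>x\<le>b. g x = 0"
    and gb: "\<exists>c\<ge>b. \<forall>x>c. g x = 0" using q by (auto simp: qe Xset_iff)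
  obtain bf where bf: "bf \<ge> a" "\<forall>x>bf. f x = 0" using fb by auto
  obtain bg where bg: "bg \<ge> b" "\<forall>x>bg. g x = 0" using gb by auto
  define S where "S = {t. t \<ge> max a b \<and> (\<forall>x>t. f x = g x)}"
  have Sne: "max bf bg \<in> S" using bf bg by (auto simp: S_def)
  have Sbdd: "bdd_below S" unfolding S_def bdd_below_def by auto
  define c where "c = Inf S"
  have cge: "c \<ge> max a b" unfolding c_def
    by (rule cInf_greatest) (use Sne in \<open>auto simp: S_def\<close>)
  have agree: "f x = g x" if "x > c" for x
  proof -
    have "\<exists>t\<in>S. t < x" using that Sne Sbdd unfolding c_def
      by (subst cInf_less_iff[symmetric]) auto
    then show ?thesis by (auto simp: S_def)
  qed
  define h where "h = (\<lambda>x. if x > c then f x else 0)"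
  have hX: "(h, c) \<in> Xset"
    unfolding Xset_iff
  proof (intro conjI)
    show "c > 0" using cge a0 by auto
    show "\<forall>x\<le>c. h x = 0" by (auto simp: h_def)
    show "\<exists>b'\<ge>c. \<forall>x>b'. h x = 0"
      by (rule exI[of _ "max bf c"]) (use bf in \<open>auto simp: h_def\<close>)
    show "pc_left c h"
      unfolding pc_left_def
    proof (intro allI impI)
      fix x assume xc: "x > c"
      then have "x > a" using cge by auto
      then obtain e where e: "e > 0" "x - e > a" "\<forall>y\<in>{x - e..x}. f y = f x"
        using fpc unfolding pc_left_def by blast
      define e' where "e' = min e ((x - c) / 2)"
      have e'e: "e' \<le> e" unfolding e'_def by (rule min.cobounded1)
      have e'0: "e' > 0" using e xc by (auto simp: e'_def)
      have "e' \<le> (x - c) / 2" unfolding e'_def by (rule min.cobounded2)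
      moreover have "(x - c) / 2 < x - c" using xc by simp
      ultimately have xe: "x - e' > c" by linarith
      have "\<forall>y\<in>{x - e'..x}. h y = h x"
      proof
        fix y assume y: "y \<in> {x - e'..x}"
        have yc: "y > c" using y xe by simp
        have "y \<in> {x - e..x}" using y e'e by simp
        then have "f y = f x" using e(3) by blast
        then show "h y = h x" using yc xc unfolding h_def by simp
      qed
      then show "\<exists>\<epsilon>>0. x - \<epsilon> > c \<and> (\<forall>y\<in>{x - \<epsilon>..x}. h y = h x)" using e'0 xe by blast
    qed
  qed
  have "is_sup_on Xset Xle p q (h, c)"
    unfolding is_sup_on_def
  proof (intro conjI ballI impI)
    show "(h, c) \<in> Xset" by (rule hX)
    show "Xle p (h, c)" using cge by (auto simp: Xle_def pe h_def)
    show "Xle q (h, c)" using cge agree by (auto simp: Xle_def qe h_def)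
    fix z assume z: "z \<in> Xset" and lz: "Xle p z \<and> Xle q z"
    obtain k d where ze: "z = (k, d)" by (cases z)
    have dS: "d \<in> S" using lz by (auto simp: S_def Xle_def pe qe ze)
    have "c \<le> d" unfolding c_def by (rule cInf_lower[OF dS Sbdd])
    then show "Xle (h, c) z" using lz by (auto simp: Xle_def pe ze h_def)
  qed
  then show ?thesis by blast
qed

theorem lemma4:
  shows "join_semilattice_on (Xset :: ((real \<Rightarrow> 'g::group_add) \<times> real) set) Xle \<and>
         upper_semilinear_on (Xset :: ((real \<Rightarrow> 'g::group_add) \<times> real) set) Xle"
  using poset semilinear sup_exists unfolding join_semilattice_on_def by blast

end
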